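(* Let $\mathbb{F}$ be a finite field, $G\subseteq\mathbb{F}$, $m,k\in\mathbb{N}$, and $d,d'\in\mathbb{N}$ with $d'\ge2(|G|-1)$. Let $Q\subseteq\mathbb{F}^{m+k}$ with $|Q|<|G|^k$, and let $Z$ be uniformly random in $\mathbb{F}^{\le d,\le d'}[X_1,\dots,X_m,Y_1,\dots,Y_k]$. Then the random vectors $\big(\sum_{\vec y\in G^k}Z(\vec\alpha,\vec y)\big)_{\vec\alpha\in\mathbb{F}^m}$ and $\big(Z(\vec q)\big)_{\vec q\in Q}$ are statistically independent.
   Context: $\mathbb{F}^{\le d,\le d'}[X_1,\dots,X_m,Y_1,\dots,Y_k]$ denotes the set of $(m+k)$-variate polynomials over $\mathbb{F}$ of individual degree at most $d$ in each of $X_1,\dots,X_m$ and at most $d'$ in each of $Y_1,\dots,Y_k$. *)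

theory Defs
  imports "HOL-Probability.Probability_Mass_Function"
begin

definition ideg_exps :: "nat \<Rightarrow> nat \<Rightarrow> nat \<Rightarrow> nat \<Rightarrow> (nat list \<times> nat list) set" where
  "ideg_exps m k d d' =
     {e. length e = m \<and> (\<forall>i\<in>set e. i \<le> d)} \<times> {f. length f = k \<and> (\<forall>j\<in>set f. j \<le> d')}"

text \<open>The polynomial space F^{<=d,<=d'}[X_1..X_m,Y_1..Y_k], represented by coefficient
  functions on exponent vectors supported in ideg_exps.\<close>
definition ideg_polys :: "nat \<Rightarrow> nat \<Rightarrow> nat \<Rightarrow> nat \<Rightarrow> ((nat list \<times> nat list) \<Rightarrow> 'a::zero) set" where
  "ideg_polys m k d d' = {c. \<forall>ef. ef \<notin> ideg_exps m k d d' \<longrightarrow> c ef = 0}"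

definition ideg_eval :: "nat \<Rightarrow> nat \<Rightarrow> nat \<Rightarrow> nat \<Rightarrow> ((nat list \<times> nat list) \<Rightarrow> 'a::comm_ring_1)
    \<Rightarrow> 'a list \<Rightarrow> 'a list \<Rightarrow> 'a" where
  "ideg_eval m k d d' c xs ys =
     (\<Sum>(e, f)\<in>ideg_exps m k d d'. c (e, f) * (\<Prod>i<m. xs ! i ^ (e ! i)) * (\<Prod>j<k. ys ! j ^ (f ! j)))"

definition vecs :: "nat \<Rightarrow> 'a set \<Rightarrow> 'a list set" where
  "vecs n S = {v. length v = n \<and> set v \<subseteq> S}"

end

theory Submission
  imports Defs "HOL-Library.Function_Algebras"
begin


lemma indep_card:
  fixes V :: "'v::ab_group_add set" and f1 :: "'v \<Rightarrow> 'i \<Rightarrow> 'b::ab_group_add"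
    and f2 :: "'v \<Rightarrow> 'j \<Rightarrow> 'c::ab_group_add" and S1 :: "'i set" and S2 :: "'j set" and a :: "'i \<Rightarrow> 'b" and b :: "'j \<Rightarrow> 'c"
  assumes fin: "finite V"
    and add: "\<And>x y. x \<in> V \<Longrightarrow> y \<in> V \<Longrightarrow> x + y \<in> V"
    and neg: "\<And>x. x \<in> V \<Longrightarrow> - x \<in> V"
    and a1: "\<And>x y i. f1 (x + y) i = f1 x i + f1 y i"
    and a2: "\<And>x y i. f2 (x + y) i = f2 x i + f2 y i"
    and dec: "\<And>Z. Z \<in> V \<Longrightarrow> \<exists>W\<in>V. (\<forall>i\<in>S1. f1 W i = 0) \<and> (\<forall>j\<in>S2. f2 W j = f2 Z j)"
  shows "card {Z\<in>V. restrict (f1 Z) S1 = a \<and> restrict (f2 Z) S2 = b} * card V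
       = card {Z\<in>V. restrict (f1 Z) S1 = a} * card {Z\<in>V. restrict (f2 Z) S2 = b}"
proof -
  have sub: "x - y \<in> V" if "x \<in> V" "y \<in> V" for x y
    using add[OF that(1) neg[OF that(2)]] by simp
  have s1: "f1 (x - y) i = f1 x i - f1 y i" for x y i
    using a1[of "x - y" y i] by (simp add: algebra_simps)
  have s2: "f2 (x - y) i = f2 x i - f2 y i" for x y i
    using a2[of "x - y" y i] by (simp add: algebra_simps)
  have r1: "restrict (f1 x) S1 = restrict (f1 y) S1 \<longleftrightarrow> (\<forall>i\<in>S1. f1 x i = f1 y i)" for x y
    by (auto simp: restrict_def fun_eq_iff)
  have r2: "restrict (f2 x) S2 = restrict (f2 y) S2 \<longleftrightarrow> (\<forall>i\<in>S2. f2 x i = f2 y i)" for x y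
    by (auto simp: restrict_def fun_eq_iff)
  define A where "A = {Z\<in>V. restrict (f1 Z) S1 = a}"
  define B where "B = {Z\<in>V. restrict (f2 Z) S2 = b}"
  have AB: "{Z\<in>V. restrict (f1 Z) S1 = a \<and> restrict (f2 Z) S2 = b} = A \<inter> B"
    unfolding A_def B_def by auto
  show ?thesis
  proof (cases "A \<inter> B = {}")
    case True
    have "A = {} \<or> B = {}"
    proof (rule ccontr)
      assume "\<not> (A = {} \<or> B = {})"
      then obtain u w where u: "u \<in> A" and w: "w \<in> B" by auto
      have uV: "u \<in> V" and wV: "w \<in> V" using u w by (auto simp: A_def B_def)
      obtain W where W: "W \<in> V" "\<forall>i\<in>S1. f1 W i = 0" "\<forall>j\<in>S2. f2 W j = f2 (w - u) j"
        using dec[OF sub[OF wV uV]] by blast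
      have "u + W \<in> A"
        using u W add[OF uV W(1)] unfolding A_def
        by (auto simp: a1 r1[symmetric])
      moreover have "u + W \<in> B"
      proof -
        have "restrict (f2 (u + W)) S2 = restrict (f2 w) S2"
          using W by (simp add: r2 a2 s2)
        then show ?thesis using w add[OF uV W(1)] unfolding B_def by simp
      qed
      ultimately show False using True by auto
    qed
    then show ?thesis unfolding AB A_def[symmetric] B_def[symmetric] using True by auto
  next
    case False
    then obtain Z0 where Z0: "Z0 \<in> A" "Z0 \<in> B" by auto
    have Z0V: "Z0 \<in> V" using Z0 by (auto simp: A_def)
    define K1 where "K1 = {Z\<in>V. \<forall>i\<in>S1. f1 Z i = 0}"
    define K2 where "K2 = {Z\<in>V. \<forall>i\<in>S2. f2 Z i = 0}"
    have cA: "card A = card K1"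
    proof -
      have "A = (\<lambda>t. Z0 + t) ` K1"
      proof
        show "A \<subseteq> (\<lambda>t. Z0 + t) ` K1"
        proof
          fix x assume x: "x \<in> A"
          then have xV: "x \<in> V" by (auto simp: A_def)
          have "x - Z0 \<in> K1" using x Z0 sub[OF xV Z0V] unfolding K1_def A_def
            by (auto simp: s1 r1[symmetric])
          then show "x \<in> (\<lambda>t. Z0 + t) ` K1" by (intro image_eqI[of _ _ "x - Z0"]) auto
        qed
        show "(\<lambda>t. Z0 + t) ` K1 \<subseteq> A"
        proof
          fix x assume "x \<in> (\<lambda>t. Z0 + t) ` K1"
          then obtain t where t: "t \<in> K1" "x = Z0 + t" by auto
          have "restrict (f1 x) S1 = restrict (f1 Z0) S1" using t by (simp add: r1 a1 K1_def)
          then show "x \<in> A" using t Z0 add[OF Z0V, of t] unfolding A_def K1_def by auto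
        qed
      qed
      moreover have "inj_on (\<lambda>t. Z0 + t) K1" by (auto intro: inj_onI)
      ultimately show ?thesis by (simp add: card_image)
    qed
    have cB: "card B = card K2"
    proof -
      have "B = (\<lambda>t. Z0 + t) ` K2"
      proof
        show "B \<subseteq> (\<lambda>t. Z0 + t) ` K2"
        proof
          fix x assume x: "x \<in> B"
          then have xV: "x \<in> V" by (auto simp: B_def)
          have "x - Z0 \<in> K2" using x Z0 sub[OF xV Z0V] unfolding K2_def B_def
            by (auto simp: s2 r2[symmetric])
          then show "x \<in> (\<lambda>t. Z0 + t) ` K2" by (intro image_eqI[of _ _ "x - Z0"]) auto
        qed
        show "(\<lambda>t. Z0 + t) ` K2 \<subseteq> B"
        proof
          fix x assume "x \<in> (\<lambda>t. Z0 + t) ` K2"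
          then obtain t where t: "t \<in> K2" "x = Z0 + t" by auto
          have "restrict (f2 x) S2 = restrict (f2 Z0) S2" using t by (simp add: r2 a2 K2_def)
          then show "x \<in> B" using t Z0 add[OF Z0V, of t] unfolding B_def K2_def by auto
        qed
      qed
      moreover have "inj_on (\<lambda>t. Z0 + t) K2" by (auto intro: inj_onI)
      ultimately show ?thesis by (simp add: card_image)
    qed
    have cAB: "card (A \<inter> B) = card (K1 \<inter> K2)"
    proof -
      have "A \<inter> B = (\<lambda>t. Z0 + t) ` (K1 \<inter> K2)"
      proof
        show "A \<inter> B \<subseteq> (\<lambda>t. Z0 + t) ` (K1 \<inter> K2)"
        proof
          fix x assume x: "x \<in> A \<inter> B"
          then have xV: "x \<in> V" by (auto simp: A_def)
          have "x - Z0 \<in> K1 \<inter> K2" using x Z0 sub[OF xV Z0V] unfolding K1_def K2_def A_def B_def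
            by (auto simp: s1 s2 r1[symmetric] r2[symmetric])
          then show "x \<in> (\<lambda>t. Z0 + t) ` (K1 \<inter> K2)" by (intro image_eqI[of _ _ "x - Z0"]) auto
        qed
        show "(\<lambda>t. Z0 + t) ` (K1 \<inter> K2) \<subseteq> A \<inter> B"
        proof
          fix x assume "x \<in> (\<lambda>t. Z0 + t) ` (K1 \<inter> K2)"
          then obtain t where t: "t \<in> K1" "t \<in> K2" "x = Z0 + t" by auto
          have "restrict (f1 x) S1 = restrict (f1 Z0) S1" using t by (simp add: r1 a1 K1_def)
          moreover have "restrict (f2 x) S2 = restrict (f2 Z0) S2" using t by (simp add: r2 a2 K2_def)
          ultimately show "x \<in> A \<inter> B" using t Z0 add[OF Z0V, of t] unfolding A_def B_def K1_def by auto
        qed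
      qed
      moreover have "inj_on (\<lambda>t. Z0 + t) (K1 \<inter> K2)" by (auto intro: inj_onI)
      ultimately show ?thesis by (simp add: card_image)
    qed
    have fK1: "finite K1" "finite K2" using fin by (auto simp: K1_def K2_def)
    have fib: "card {p \<in> K1 \<times> K2. fst p + snd p = v} = card (K1 \<inter> K2)" if vV: "v \<in> V" for v
    proof -
      obtain W where W: "W \<in> V" "\<forall>i\<in>S1. f1 W i = 0" "\<forall>j\<in>S2. f2 W j = f2 v j"
        using dec[OF vV] by blast
      have WK1: "W \<in> K1" using W by (auto simp: K1_def)
      have "{p \<in> K1 \<times> K2. fst p + snd p = v} = (\<lambda>t. (W + t, (v - W) - t)) ` (K1 \<inter> K2)"
      proof
        show "{p \<in> K1 \<times> K2. fst p + snd p = v} \<subseteq> (\<lambda>t. (W + t, (v - W) - t)) ` (K1 \<inter> K2)"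
        proof
          fix p assume p: "p \<in> {p \<in> K1 \<times> K2. fst p + snd p = v}"
          obtain x y where xy: "p = (x, y)" by (cases p)
          have x: "x \<in> K1" and y: "y \<in> K2" and v: "x + y = v" using p xy by auto
          have xV: "x \<in> V" using x by (auto simp: K1_def)
          have "x - W \<in> K1" using x WK1 sub[OF xV W(1)] by (auto simp: K1_def s1)
          moreover have "x - W \<in> K2"
          proof -
            have "\<forall>j\<in>S2. f2 (x - W) j = 0"
            proof
              fix j assume j: "j \<in> S2"
              have "f2 v j = f2 x j + f2 y j" using v a2 by metis
              then show "f2 (x - W) j = 0" using y j W(3) by (simp add: s2 K2_def)
            qed
            then show ?thesis using sub[OF xV W(1)] by (auto simp: K2_def)
          qed
          moreover have "p = (W + (x - W), (v - W) - (x - W))" using xy v by (auto simp: algebra_simps)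
          ultimately show "p \<in> (\<lambda>t. (W + t, (v - W) - t)) ` (K1 \<inter> K2)" by blast
        qed
        show "(\<lambda>t. (W + t, (v - W) - t)) ` (K1 \<inter> K2) \<subseteq> {p \<in> K1 \<times> K2. fst p + snd p = v}"
        proof
          fix p assume "p \<in> (\<lambda>t. (W + t, (v - W) - t)) ` (K1 \<inter> K2)"
          then obtain t where t: "t \<in> K1" "t \<in> K2" "p = (W + t, (v - W) - t)" by auto
          have tV: "t \<in> V" using t by (auto simp: K1_def)
          have "W + t \<in> K1" using t W add[OF W(1) tV] by (auto simp: K1_def a1)
          moreover have "(v - W) - t \<in> K2" using t W sub[OF sub[OF vV W(1)] tV]
            by (auto simp: K2_def s2)
          ultimately show "p \<in> {p \<in> K1 \<times> K2. fst p + snd p = v}" using t by auto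
        qed
      qed
      moreover have "inj_on (\<lambda>t. (W + t, (v - W) - t)) (K1 \<inter> K2)" by (auto intro: inj_onI)
      ultimately show ?thesis by (simp add: card_image)
    qed
    have "card K1 * card K2 = card (K1 \<times> K2)" by (simp add: card_cartesian_product)
    also have "\<dots> = (\<Sum>v\<in>V. card {p \<in> K1 \<times> K2. fst p + snd p = v})"
    proof -
      have img: "(\<lambda>p. fst p + snd p) ` (K1 \<times> K2) \<subseteq> V"
        using add by (auto simp: K1_def K2_def)
      have "(\<Sum>v\<in>V. \<Sum>p\<in>{p. p \<in> K1 \<times> K2 \<and> fst p + snd p = v}. (1::nat)) = (\<Sum>p\<in>K1 \<times> K2. 1)"
        by (rule sum.group[OF _ fin img]) (use fK1 in auto)
      then show ?thesis by simp
    qed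
    also have "\<dots> = card V * card (K1 \<inter> K2)" using fib by simp
    finally show ?thesis using AB cA cB cAB A_def B_def by (simp add: mult.commute)
  qed
qed



definition monk :: "nat \<Rightarrow> nat list \<Rightarrow> 'a::comm_ring_1 list \<Rightarrow> 'a" where
  "monk k f y = (\<Prod>j<k. y ! j ^ (f ! j))"

definition Eb :: "nat \<Rightarrow> (nat \<Rightarrow> nat) \<Rightarrow> nat list set" where
  "Eb k b = {f. length f = k \<and> (\<forall>j<k. f ! j \<le> b j)}"

definition rep :: "nat \<Rightarrow> (nat \<Rightarrow> nat) \<Rightarrow> ('a::comm_ring_1 list \<Rightarrow> 'a) \<Rightarrow> bool" where
  "rep k b p \<longleftrightarrow> (\<exists>r. (\<forall>f. f \<notin> Eb k b \<longrightarrow> r f = 0) \<and> (\<forall>y. p y = (\<Sum>f\<in>Eb k b. r f * monk k f y)))"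

lemma finite_Eb: "finite (Eb k b)"
proof -
  have "Eb k b \<subseteq> {xs. set xs \<subseteq> {..(\<Sum>j<k. b j)} \<and> length xs = k}"
  proof
    fix f assume f: "f \<in> Eb k b"
    have "set f \<subseteq> {..(\<Sum>j<k. b j)}"
    proof
      fix x assume "x \<in> set f"
      then obtain j where j: "j < length f" "f ! j = x" by (auto simp: in_set_conv_nth)
      have "x \<le> b j" using f j by (auto simp: Eb_def)
      also have "b j \<le> (\<Sum>j<k. b j)" using j f by (intro member_le_sum) (auto simp: Eb_def)
      finally show "x \<in> {..(\<Sum>j<k. b j)}" by simp
    qed
    then show "f \<in> {xs. set xs \<subseteq> {..(\<Sum>j<k. b j)} \<and> length xs = k}" using f by (auto simp: Eb_def)
  qed
  then show ?thesis by (rule finite_subset) (rule finite_lists_length_eq, simp)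
qed

lemma rep_mono:
  assumes "rep k b p" "\<And>j. j < k \<Longrightarrow> b j \<le> b' j"
  shows "rep k b' p"
proof -
  obtain r where r: "\<forall>f. f \<notin> Eb k b \<longrightarrow> r f = 0" "\<forall>y. p y = (\<Sum>f\<in>Eb k b. r f * monk k f y)"
    using assms(1) by (auto simp: rep_def)
  have sub: "Eb k b \<subseteq> Eb k b'" using assms(2) by (auto simp: Eb_def intro: order_trans)
  have "\<forall>f. f \<notin> Eb k b' \<longrightarrow> r f = 0" using r(1) sub by auto
  moreover have "\<forall>y. p y = (\<Sum>f\<in>Eb k b'. r f * monk k f y)"
  proof
    fix y
    have "(\<Sum>f\<in>Eb k b. r f * monk k f y) = (\<Sum>f\<in>Eb k b'. r f * monk k f y)"
      by (rule sum.mono_neutral_left[OF finite_Eb sub]) (use r(1) in auto)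
    then show "p y = (\<Sum>f\<in>Eb k b'. r f * monk k f y)" using r(2) by simp
  qed
  ultimately show ?thesis by (auto simp: rep_def)
qed

lemma rep_zero: "rep k b (\<lambda>y. 0)"
  unfolding rep_def by (rule exI[of _ "\<lambda>_. 0"]) simp

lemma rep_add:
  assumes "rep k b p" "rep k b q"
  shows "rep k b (\<lambda>y. p y + q y)"
proof -
  obtain r where r: "\<forall>f. f \<notin> Eb k b \<longrightarrow> r f = 0" "\<forall>y. p y = (\<Sum>f\<in>Eb k b. r f * monk k f y)"
    using assms(1) by (auto simp: rep_def)
  obtain s where s: "\<forall>f. f \<notin> Eb k b \<longrightarrow> s f = 0" "\<forall>y. q y = (\<Sum>f\<in>Eb k b. s f * monk k f y)"
    using assms(2) by (auto simp: rep_def)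
  show ?thesis unfolding rep_def
    by (rule exI[of _ "\<lambda>f. r f + s f"]) (use r s in \<open>auto simp: distrib_right sum.distrib\<close>)
qed

lemma rep_smult:
  assumes "rep k b p"
  shows "rep k b (\<lambda>y. c * p y)"
proof -
  obtain r where r: "\<forall>f. f \<notin> Eb k b \<longrightarrow> r f = 0" "\<forall>y. p y = (\<Sum>f\<in>Eb k b. r f * monk k f y)"
    using assms(1) by (auto simp: rep_def)
  show ?thesis unfolding rep_def
    by (rule exI[of _ "\<lambda>f. c * r f"]) (use r in \<open>auto simp: sum_distrib_left mult.assoc\<close>)
qed

lemma rep_sum:
  assumes "finite H" "\<And>h. h \<in> H \<Longrightarrow> rep k b (g h)"
  shows "rep k b (\<lambda>y. \<Sum>h\<in>H. g h y)"
  using assms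
proof (induction H rule: finite_induct)
  case empty
  then show ?case using rep_zero by simp
next
  case (insert x F)
  then show ?case by (simp add: rep_add)
qed

lemma rep_one: "rep k (\<lambda>_. 0) (\<lambda>y. 1)"
proof -
  have E: "Eb k (\<lambda>_. 0) = {replicate k 0}"
    by (auto simp: Eb_def intro!: nth_equalityI)
  show ?thesis unfolding rep_def E
    by (rule exI[of _ "\<lambda>f. if f = replicate k 0 then 1 else 0"]) (auto simp: monk_def)
qed

lemma monk_shift:
  assumes "length f = k" "j < k"
  shows "monk k (f[j := Suc (f ! j)]) y = y ! j * monk k f y"
proof -
  have "monk k (f[j := Suc (f ! j)]) y = (\<Prod>i<k. y ! i ^ (f ! i) * (if i = j then y ! i else 1))"
    unfolding monk_def using assms by (intro prod.cong) (auto simp: nth_list_update)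
  also have "\<dots> = monk k f y * y ! j" using assms by (simp add: prod.distrib monk_def)
  finally show ?thesis by (simp add: mult.commute)
qed

lemma rep_mulvar:
  assumes "rep k b p" "j < k"
  shows "rep k (b(j := Suc (b j))) (\<lambda>y. y ! j * p y)"
proof -
  obtain r where r: "\<forall>f. f \<notin> Eb k b \<longrightarrow> r f = 0" "\<forall>y. p y = (\<Sum>f\<in>Eb k b. r f * monk k f y)"
    using assms(1) by (auto simp: rep_def)
  define sh where "sh = (\<lambda>f::nat list. f[j := Suc (f ! j)])"
  define ush where "ush = (\<lambda>f::nat list. f[j := f ! j - 1])"
  have ush_sh: "ush (sh f) = f" if "length f = k" for f
    using that assms(2) by (simp add: sh_def ush_def)
  have inj: "inj_on sh (Eb k b)"
    by (rule inj_on_inverseI[where g = ush]) (auto simp: ush_sh Eb_def)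
  have img: "sh ` Eb k b \<subseteq> Eb k (b(j := Suc (b j)))"
    using assms(2) by (auto simp: sh_def Eb_def nth_list_update)
  define r' where "r' = (\<lambda>f. if f \<in> sh ` Eb k b then r (ush f) else 0)"
  have "\<forall>f. f \<notin> Eb k (b(j := Suc (b j))) \<longrightarrow> r' f = 0" using img by (auto simp: r'_def)
  moreover have "\<forall>y. y ! j * p y = (\<Sum>f\<in>Eb k (b(j := Suc (b j))). r' f * monk k f y)"
  proof
    fix y
    have "(\<Sum>f\<in>Eb k (b(j := Suc (b j))). r' f * monk k f y) = (\<Sum>f\<in>sh ` Eb k b. r' f * monk k f y)"
      by (rule sum.mono_neutral_right[OF finite_Eb img]) (auto simp: r'_def)
    also have "\<dots> = (\<Sum>f\<in>Eb k b. r' (sh f) * monk k (sh f) y)"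
      by (rule sum.reindex[OF inj, unfolded comp_def])
    also have "\<dots> = (\<Sum>f\<in>Eb k b. y ! j * (r f * monk k f y))"
      by (intro sum.cong refl) (auto simp: r'_def ush_sh[unfolded sh_def] Eb_def sh_def monk_shift assms(2))
    also have "\<dots> = y ! j * p y" using r(2) by (simp add: sum_distrib_left)
    finally show "y ! j * p y = (\<Sum>f\<in>Eb k (b(j := Suc (b j))). r' f * monk k f y)" by simp
  qed
  ultimately show ?thesis unfolding rep_def by blast
qed

lemma rep_mullin:
  assumes "rep k b p" "j < k"
  shows "rep k (b(j := Suc (b j))) (\<lambda>y. (y ! j - c) * p y)"
proof -
  have "rep k (b(j := Suc (b j))) (\<lambda>y. y ! j * p y + (- c) * p y)"
    by (intro rep_add rep_mulvar assms rep_smult rep_mono[OF assms(1)]) auto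
  then show ?thesis by (simp add: algebra_simps)
qed

lemma rep_mulprod:
  assumes "finite H" "rep k b p" "j < k"
  shows "rep k (b(j := b j + card H)) (\<lambda>y. (\<Prod>g\<in>H. y ! j - g) * p y)"
  using assms(1)
proof (induction H rule: finite_induct)
  case empty
  then show ?case using assms(2) by simp
next
  case (insert x F)
  have "rep k ((b(j := b j + card F))(j := Suc ((b(j := b j + card F)) j)))
          (\<lambda>y. (y ! j - x) * ((\<Prod>g\<in>F. y ! j - g) * p y))"
    by (rule rep_mullin[OF insert.IH assms(3)])
  moreover have "b(j := b j + card (insert x F)) = (b(j := b j + card F))(j := Suc ((b(j := b j + card F)) j))"
    using insert.hyps by simp
  ultimately show ?case using insert.hyps by (simp only: prod.insert[OF insert.hyps] mult.assoc)
qed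

definition J :: "'a::comm_ring_1 set \<Rightarrow> 'a list \<Rightarrow> nat \<Rightarrow> 'a list \<Rightarrow> 'a" where
  "J G h n y = (\<Prod>j<n. \<Prod>g\<in>G - {h ! j}. y ! j - g)"

lemma rep_J:
  assumes "finite G" "n \<le> k" "\<And>j. j < k \<Longrightarrow> h ! j \<in> G" "rep k b p"
  shows "rep k (\<lambda>j. b j + (if j < n then card G - 1 else 0)) (\<lambda>y. J G h n y * p y)"
  using assms(2)
proof (induction n)
  case 0
  then show ?case using assms(4) by (simp add: J_def)
next
  case (Suc n)
  have cG: "card (G - {h ! n}) = card G - 1" using assms(1,3) Suc.prems by simp
  have "rep k ((\<lambda>j. b j + (if j < n then card G - 1 else 0))(n := b n + (if n < n then card G - 1 else 0) + card (G - {h ! n})))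
     (\<lambda>y. (\<Prod>g\<in>G - {h ! n}. y ! n - g) * (J G h n y * p y))"
    using rep_mulprod[OF _ Suc.IH, of "G - {h ! n}" n] Suc.prems assms(1) by simp
  moreover have "((\<lambda>j. b j + (if j < n then card G - 1 else 0))(n := b n + (if n < n then card G - 1 else 0) + card (G - {h ! n})))
      = (\<lambda>j. b j + (if j < Suc n then card G - 1 else 0))"
    using cG by (auto simp: fun_eq_iff)
  moreover have "(\<lambda>y. (\<Prod>g\<in>G - {h ! n}. y ! n - g) * (J G h n y * p y)) = (\<lambda>y. J G h (Suc n) y * p y)"
    by (auto simp: J_def fun_eq_iff mult.commute mult.left_commute)
  ultimately show ?case by simp
qed

lemma J_zero:
  assumes "y \<in> {v. length v = k \<and> set v \<subseteq> G}" "length h = k" "y \<noteq> h" "finite G"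
  shows "J G h k y = 0"
proof -
  obtain j where j: "j < k" "y ! j \<noteq> h ! j"
    using assms(1-3) nth_equalityI[of y h] by auto
  have "y ! j \<in> G" using assms(1) j(1) by auto
  then have "(\<Prod>g\<in>G - {h ! j}. y ! j - g) = 0" using j(2) assms(4)
    by (intro prod_zero) auto
  then show ?thesis unfolding J_def using j(1) by (intro prod_zero) auto
qed

lemma J_nz:
  fixes G :: "'a::field set"
  assumes "finite G"
  shows "J G h k h \<noteq> 0"
  unfolding J_def using assms by (auto simp: prod_zero_iff)



lemma card_vecs: "finite G \<Longrightarrow> card (vecs k G) = card G ^ k"
  unfolding vecs_def using card_lists_length_eq[of G k] by (simp add: conj_commute)

lemma finite_vecs: "finite G \<Longrightarrow> finite (vecs k G)"
  unfolding vecs_def using finite_lists_length_eq[of G k] by (simp add: conj_commute)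

lemma exists_R:
  fixes G :: "'a::{finite,field} set" and T :: "'a list set"
  assumes cT: "card T < card G ^ k" and fT: "finite T"
  shows "\<exists>p. rep k (\<lambda>_. 2 * (card G - 1)) p \<and> (\<forall>t\<in>T. p t = 0) \<and> (\<Sum>y\<in>vecs k G. p y) = 1"
proof -
  define n0 where "n0 = card G - 1"
  define E0 where "E0 = Eb k (\<lambda>_. n0)"
  define pe where "pe = (\<lambda>r y. \<Sum>f\<in>E0. r f * monk k f (y::'a list))"
  define VG where "VG = vecs k G"
  have fG: "finite G" by simp
  have Gk: "G \<noteq> {} \<or> k = 0"
    using cT by (cases k) auto
  have E0eq: "E0 = {xs. set xs \<subseteq> {..<card G} \<and> length xs = k}"
  proof (cases "G = {}")
    case True
    then have "k = 0" using Gk by simp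
    then show ?thesis by (auto simp: E0_def Eb_def)
  next
    case False
    then have "card G > 0" using fG by (simp add: card_gt_0_iff)
    then have lt: "\<And>x::nat. x \<le> n0 \<longleftrightarrow> x < card G" unfolding n0_def by linarith
    show ?thesis by (auto simp: E0_def Eb_def lt in_set_conv_nth) (meson lessThan_iff nth_mem subsetD)
  qed
  have cE0: "card E0 = card G ^ k" unfolding E0eq using card_lists_length_eq[of "{..<card G}" k] by simp
  have fE0: "finite E0" unfolding E0_def by (rule finite_Eb)
  have cVG: "card VG = card G ^ k" by (simp add: VG_def card_vecs)
  have fVG: "finite VG" by (simp add: VG_def finite_vecs)
  have lenVG: "length h = k" "\<And>j. j < k \<Longrightarrow> h ! j \<in> G" if "h \<in> VG" for h
    using that by (auto simp: VG_def vecs_def)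
  define C where "C = (PiE E0 (\<lambda>_. UNIV::'a set))"
  have fC: "finite C" unfolding C_def using fE0 by (intro finite_PiE) auto
  have cC: "card C = CARD('a) ^ (card G ^ k)"
    unfolding C_def using fE0 cE0 by (simp add: card_PiE)
  define Psi where "Psi = (\<lambda>r. restrict (pe r) VG)"
  have pe_restr: "pe (restrict r E0) = pe r" for r
    unfolding pe_def by (intro ext sum.cong) auto
  have PsiC: "Psi ` C = PiE VG (\<lambda>_. UNIV)"
  proof
    show "Psi ` C \<subseteq> PiE VG (\<lambda>_. UNIV)" by (auto simp: Psi_def)
    show "PiE VG (\<lambda>_. UNIV) \<subseteq> Psi ` C"
    proof
      fix phi assume phi: "phi \<in> PiE VG (\<lambda>_. UNIV :: 'a set)"
      define P where "P = (\<lambda>y. \<Sum>h\<in>VG. (phi h * inverse (J G h k h)) * (J G h k y * 1))"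
      have "rep k (\<lambda>j. 0 + (if j < k then card G - 1 else 0)) (\<lambda>y. J G h k y * 1)" if "h \<in> VG" for h
        by (rule rep_J[OF fG order_refl lenVG(2)[OF that] rep_one])
      then have "rep k (\<lambda>j. 0 + (if j < k then card G - 1 else 0)) P"
        unfolding P_def by (intro rep_sum fVG rep_smult) auto
      then have "rep k (\<lambda>_. n0) P" by (rule rep_mono) (auto simp: n0_def)
      then obtain r where r: "\<forall>y. P y = pe r y" unfolding rep_def pe_def E0_def by blast
      have Pval: "P y = phi y" if y: "y \<in> VG" for y
      proof -
        have "P y = (phi y * inverse (J G y k y)) * (J G y k y * 1)
            + (\<Sum>h\<in>VG - {y}. (phi h * inverse (J G h k h)) * (J G h k y * 1))"
          unfolding P_def using fVG y by (simp add: sum.remove)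
        also have "(\<Sum>h\<in>VG - {y}. (phi h * inverse (J G h k h)) * (J G h k y * 1)) = 0"
        proof (intro sum.neutral ballI)
          fix h assume hh: "h \<in> VG - {y}"
          have "J G h k y = 0" using y hh fG by (intro J_zero) (auto simp: VG_def vecs_def)
          then show "(phi h * inverse (J G h k h)) * (J G h k y * 1) = 0" by simp
        qed
        finally show ?thesis using J_nz[OF fG, of y k] by simp
      qed
      have "Psi (restrict r E0) = phi"
      proof
        fix y show "Psi (restrict r E0) y = phi y"
          using phi Pval r by (cases "y \<in> VG") (auto simp: Psi_def pe_restr PiE_def extensional_def)
      qed
      moreover have "restrict r E0 \<in> C" by (auto simp: C_def)
      ultimately show "phi \<in> Psi ` C" by blast
    qed
  qed
  have injPsi: "inj_on Psi C"
  proof (rule eq_card_imp_inj_on[OF fC])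
    show "card (Psi ` C) = card C" unfolding PsiC cC using fVG cVG by (simp add: card_PiE)
  qed
  define Phi where "Phi = (\<lambda>r. restrict (pe r) T)"
  have "\<not> inj_on Phi C"
  proof
    assume inj: "inj_on Phi C"
    have "Phi ` C \<subseteq> PiE T (\<lambda>_. UNIV)" by (auto simp: Phi_def)
    then have "card (Phi ` C) \<le> card (PiE T (\<lambda>_. UNIV :: 'a set))"
      by (intro card_mono) (use fT in \<open>auto intro: finite_PiE\<close>)
    also have "\<dots> = CARD('a) ^ card T" using fT by (simp add: card_PiE)
    also have "\<dots> < CARD('a) ^ (card G ^ k)"
    proof (rule power_strict_increasing[OF cT])
      have "card {0::'a, 1} \<le> CARD('a)" by (rule card_mono) auto
      then show "1 < CARD('a)" by simp
    qed
    finally show False using card_image[OF inj] cC by simp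
  qed
  then obtain r1 r2 where r12: "r1 \<in> C" "r2 \<in> C" "r1 \<noteq> r2" "Phi r1 = Phi r2"
    unfolding inj_on_def by blast
  define r where "r = restrict (\<lambda>f. r1 f - r2 f) E0"
  define z where "z = restrict (\<lambda>f. 0::'a) E0"
  have rC: "r \<in> C" "z \<in> C" by (auto simp: C_def r_def z_def)
  have per: "pe r y = pe r1 y - pe r2 y" for y
    unfolding pe_def r_def by (simp add: sum_subtractf[symmetric] algebra_simps)
  have pez: "pe z y = 0" for y unfolding pe_def z_def by simp
  have "r \<noteq> z"
  proof
    assume "r = z"
    have "\<forall>f\<in>E0. r1 f = r2 f"
    proof
      fix f assume f: "f \<in> E0"
      have "r f = z f" using \<open>r = z\<close> by simp
      then show "r1 f = r2 f" using f by (simp add: r_def z_def)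
    qed
    then have "r1 = r2" using r12(1,2) unfolding C_def by (auto intro: PiE_ext)
    then show False using r12(3) by simp
  qed
  then have "Psi r \<noteq> Psi z" using injPsi rC by (meson inj_on_contraD)
  then obtain h where h0: "h \<in> VG" "pe r h \<noteq> pe z h"
    unfolding Psi_def by (meson restrict_ext)
  then have h: "h \<in> VG" "pe r h \<noteq> 0" using pez by auto
  have vanish: "pe r t = 0" if "t \<in> T" for t
  proof -
    have "Phi r1 t = Phi r2 t" using r12(4) by simp
    then show ?thesis using that by (simp add: Phi_def per)
  qed
  have rep_r: "rep k (\<lambda>_. n0) (pe r)"
    unfolding rep_def E0_def[symmetric]
    by (rule exI[of _ "\<lambda>f. if f \<in> E0 then r f else 0"]) (auto simp: pe_def)
  define P0 where "P0 = (\<lambda>y. J G h k y * pe r y)"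
  have "rep k (\<lambda>j. n0 + (if j < k then card G - 1 else 0)) P0"
    unfolding P0_def by (rule rep_J[OF fG order_refl lenVG(2)[OF h(1)] rep_r])
  then have repP0: "rep k (\<lambda>_. 2 * (card G - 1)) P0" by (rule rep_mono) (auto simp: n0_def)
  have sP0: "(\<Sum>y\<in>VG. P0 y) = P0 h"
  proof -
    have "(\<Sum>y\<in>VG. P0 y) = P0 h + (\<Sum>y\<in>VG - {h}. P0 y)" using fVG h(1) by (simp add: sum.remove)
    also have "(\<Sum>y\<in>VG - {h}. P0 y) = 0"
    proof (intro sum.neutral ballI)
      fix y assume yy: "y \<in> VG - {h}"
      have "J G h k y = 0" using h(1) yy fG by (intro J_zero) (auto simp: VG_def vecs_def)
      then show "P0 y = 0" by (simp add: P0_def)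
    qed
    finally show ?thesis by simp
  qed
  have nz: "P0 h \<noteq> 0" using h(2) J_nz[OF fG, of h k] by (simp add: P0_def)
  show ?thesis
  proof (intro exI conjI ballI)
    show "rep k (\<lambda>_. 2 * (card G - 1)) (\<lambda>y. inverse (P0 h) * P0 y)" by (rule rep_smult[OF repP0])
    show "inverse (P0 h) * P0 t = 0" if "t \<in> T" for t using vanish[OF that] by (simp add: P0_def)
    show "(\<Sum>y\<in>vecs k G. inverse (P0 h) * P0 y) = 1"
      using sP0 nz by (simp add: sum_distrib_left[symmetric] VG_def)
  qed
qed



lemma eval_alt: "ideg_eval m k d d' Z x y
   = (\<Sum>(e, f)\<in>ideg_exps m k d d'. Z (e, f) * monk m e x * monk k f y)"
  by (simp add: ideg_eval_def monk_def)

lemma finite_exps: "finite (ideg_exps m k d d')"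
proof -
  have s1: "{e. length e = m \<and> (\<forall>i\<in>set e. i \<le> d)} \<subseteq> {xs. set xs \<subseteq> {..d} \<and> length xs = m}"
    and s2: "{e. length e = k \<and> (\<forall>i\<in>set e. i \<le> d')} \<subseteq> {xs. set xs \<subseteq> {..d'} \<and> length xs = k}"
    by auto
  have f1: "finite {xs. set xs \<subseteq> {..d} \<and> length xs = m}" and f2: "finite {xs. set xs \<subseteq> {..d'} \<and> length xs = k}"
    by (rule finite_lists_length_eq, simp)+
  show ?thesis unfolding ideg_exps_def
    by (rule finite_cartesian_product[OF finite_subset[OF s1 f1] finite_subset[OF s2 f2]])
qed

lemma eval_add: "ideg_eval m k d d' (Z + W) x y = ideg_eval m k d d' Z x y + ideg_eval m k d d' W x y"
  by (simp add: ideg_eval_def plus_fun_def case_prod_unfold distrib_right sum.distrib)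

lemma eval_diff: "ideg_eval m k d d' (Z - W) x y = ideg_eval m k d d' Z x y - ideg_eval m k d d' W x y"
  by (simp add: ideg_eval_def fun_diff_def case_prod_unfold left_diff_distrib sum_subtractf)

lemma EY_eq: "Eb k (\<lambda>_. d') = {f. length f = k \<and> (\<forall>j\<in>set f. j \<le> d')}"
  by (auto simp: Eb_def in_set_conv_nth) (meson nth_mem)

lemma eval_prod:
  "ideg_eval m k d d' (\<lambda>(e, f). u e * v f) x y
   = (\<Sum>e\<in>{e. length e = m \<and> (\<forall>i\<in>set e. i \<le> d)}. u e * monk m e x)
   * (\<Sum>f\<in>{f. length f = k \<and> (\<forall>j\<in>set f. j \<le> d')}. v f * monk k f y)"
  unfolding eval_alt ideg_exps_def sum_product sum.cartesian_product
  by (intro sum.cong refl) (auto simp: ac_simps)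

lemma eval_sumY:
  fixes Z :: "nat list \<times> nat list \<Rightarrow> 'a::comm_ring_1"
  shows "(\<Sum>y\<in>Y. ideg_eval m k d d' Z a y)
   = (\<Sum>e\<in>{e. length e = m \<and> (\<forall>i\<in>set e. i \<le> d)}.
        (\<Sum>f\<in>{f. length f = k \<and> (\<forall>j\<in>set f. j \<le> d')}. Z (e, f) * (\<Sum>y\<in>Y. monk k f y)) * monk m e a)"
proof -
  let ?EX = "{e. length e = m \<and> (\<forall>i\<in>set e. i \<le> d)}"
  let ?EY = "{f. length f = k \<and> (\<forall>j\<in>set f. j \<le> d')}"
  have "(\<Sum>y\<in>Y. ideg_eval m k d d' Z a y) = (\<Sum>y\<in>Y. \<Sum>e\<in>?EX. \<Sum>f\<in>?EY. Z (e, f) * monk m e a * monk k f y)"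
    unfolding eval_alt ideg_exps_def sum.cartesian_product by simp
  also have "\<dots> = (\<Sum>e\<in>?EX. \<Sum>y\<in>Y. \<Sum>f\<in>?EY. Z (e, f) * monk m e a * monk k f y)"
    by (rule sum.swap)
  also have "\<dots> = (\<Sum>e\<in>?EX. \<Sum>f\<in>?EY. \<Sum>y\<in>Y. Z (e, f) * monk m e a * monk k f y)"
    by (intro sum.cong refl sum.swap)
  also have "\<dots> = (\<Sum>e\<in>?EX. (\<Sum>f\<in>?EY. Z (e, f) * (\<Sum>y\<in>Y. monk k f y)) * monk m e a)"
    by (simp add: sum_distrib_left sum_distrib_right ac_simps)
  finally show ?thesis .
qed



theorem corollary8p3:
  fixes G :: "'a::{finite, field} set"
    and m k d d' :: nat
    and Q :: "'a list set"
  assumes "d' \<ge> 2 * (card G - 1)"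
    and "Q \<subseteq> vecs (m + k) UNIV"
    and "card Q < card G ^ k"
  shows "\<forall>a b. measure_pmf.prob (pmf_of_set (ideg_polys m k d d'))
          {Z. (\<lambda>\<alpha>\<in>vecs m UNIV. \<Sum>y\<in>vecs k G. ideg_eval m k d d' Z \<alpha> y) = a
              \<and> (\<lambda>q\<in>Q. ideg_eval m k d d' Z (take m q) (drop m q)) = b}
        = measure_pmf.prob (pmf_of_set (ideg_polys m k d d'))
            {Z. (\<lambda>\<alpha>\<in>vecs m UNIV. \<Sum>y\<in>vecs k G. ideg_eval m k d d' Z \<alpha> y) = a}
        * measure_pmf.prob (pmf_of_set (ideg_polys m k d d'))
            {Z. (\<lambda>q\<in>Q. ideg_eval m k d d' Z (take m q) (drop m q)) = b}"
proof (intro allI)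
  fix a b
  define V :: "(nat list \<times> nat list \<Rightarrow> 'a) set" where "V = ideg_polys m k d d'"
  define EXs where "EXs = {e. length e = m \<and> (\<forall>i\<in>set e. i \<le> d)}"
  define EYs where "EYs = {f. length f = k \<and> (\<forall>j\<in>set f. j \<le> d')}"
  define f1 :: "(nat list \<times> nat list \<Rightarrow> 'a) \<Rightarrow> 'a list \<Rightarrow> 'a" where "f1 = (\<lambda>Z \<alpha>. \<Sum>y\<in>vecs k G. ideg_eval m k d d' Z \<alpha> y)"
  define f2 :: "(nat list \<times> nat list \<Rightarrow> 'a) \<Rightarrow> 'a list \<Rightarrow> 'a" where "f2 = (\<lambda>Z q. ideg_eval m k d d' Z (take m q) (drop m q))"
  have Vne: "V \<noteq> {}"
  proof -
    have "(\<lambda>_. 0) \<in> V" by (simp add: V_def ideg_polys_def)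
    then show ?thesis by auto
  qed
  have Vfin: "finite V"
  proof -
    have "inj_on (\<lambda>Z. restrict Z (ideg_exps m k d d')) V"
    proof (rule inj_onI)
      fix x y assume xy: "x \<in> V" "y \<in> V" "restrict x (ideg_exps m k d d') = restrict y (ideg_exps m k d d')"
      show "x = y"
      proof
        fix ef
        show "x ef = y ef"
        proof (cases "ef \<in> ideg_exps m k d d'")
          case True
          have "restrict x (ideg_exps m k d d') ef = restrict y (ideg_exps m k d d') ef" using xy(3) by simp
          then show ?thesis using True by simp
        next
          case False
          then show ?thesis using xy(1,2) by (cases ef) (simp add: V_def ideg_polys_def)
        qed
      qed
    qed
    moreover have "(\<lambda>Z. restrict Z (ideg_exps m k d d')) ` V \<subseteq> PiE (ideg_exps m k d d') (\<lambda>_. UNIV)"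
      by auto
    moreover have "finite (PiE (ideg_exps m k d d') (\<lambda>_. UNIV :: 'a set))"
      by (intro finite_PiE finite_exps) auto
    ultimately show ?thesis by (meson finite_imageD finite_subset)
  qed
  have Qfin: "finite Q"
    using assms(2) finite_vecs[of "UNIV :: 'a set" "m + k"] finite_subset by auto
  define T where "T = drop m ` Q"
  have cT: "card T < card G ^ k" using card_image_le[OF Qfin, of "drop m"] assms(3) T_def by simp
  have fT: "finite T" using Qfin T_def by simp
  obtain p where p: "rep k (\<lambda>_. 2 * (card G - 1)) p" "\<forall>t\<in>T. p t = 0" "(\<Sum>y\<in>vecs k G. p y) = 1"
    using exists_R[OF cT fT] by blast
  have "rep k (\<lambda>_. d') p" by (rule rep_mono[OF p(1)]) (use assms(1) in auto)
  then obtain r where r: "\<forall>f. f \<notin> EYs \<longrightarrow> r f = 0" "\<forall>y. p y = (\<Sum>f\<in>EYs. r f * monk k f y)"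
    unfolding rep_def EY_eq EYs_def by blast
  have add: "x + y \<in> V" if "x \<in> V" "y \<in> V" for x y
    using that by (simp add: V_def ideg_polys_def)
  have neg: "- x \<in> V" if "x \<in> V" for x
    using that by (simp add: V_def ideg_polys_def)
  have a1: "f1 (x + y) i = f1 x i + f1 y i" for x y i
    by (simp add: f1_def eval_add sum.distrib)
  have a2: "f2 (x + y) i = f2 x i + f2 y i" for x y i
    by (simp add: f2_def eval_add)
  have dec: "\<exists>W\<in>V. (\<forall>i\<in>vecs m UNIV. f1 W i = 0) \<and> (\<forall>j\<in>Q. f2 W j = f2 Z j)" if ZV: "Z \<in> V" for Z
  proof -
    define s where "s = (\<lambda>e. if e \<in> EXs then (\<Sum>f\<in>EYs. Z (e, f) * (\<Sum>y\<in>vecs k G. monk k f y)) else 0)"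
    define Zs where "Zs = (\<lambda>(e, f). s e * r f)"
    define S where "S = (\<lambda>\<alpha>. \<Sum>e\<in>EXs. s e * monk m e \<alpha>)"
    have f1Z: "f1 Z \<alpha> = S \<alpha>" for \<alpha>
      unfolding f1_def S_def eval_sumY EXs_def[symmetric] EYs_def[symmetric] s_def
      by (intro sum.cong refl) auto
    have evZs: "ideg_eval m k d d' Zs x y = S x * p y" for x y
      unfolding Zs_def eval_prod EXs_def[symmetric] EYs_def[symmetric] S_def using r(2) by simp
    have WV: "Z - Zs \<in> V"
      unfolding V_def ideg_polys_def
    proof (intro CollectI allI impI)
      fix ef assume ef: "ef \<notin> ideg_exps m k d d'"
      obtain e f where eff: "ef = (e, f)" by (cases ef)
      have "Z ef = 0" using ZV ef unfolding eff by (simp add: V_def ideg_polys_def)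
      moreover have "Zs ef = 0" using ef r(1) unfolding eff Zs_def s_def ideg_exps_def EXs_def EYs_def
        by auto
      ultimately show "(Z - Zs) ef = 0" by simp
    qed
    show ?thesis
    proof (intro bexI[OF _ WV] conjI ballI)
      fix \<alpha> assume "\<alpha> \<in> vecs m (UNIV :: 'a set)"
      have "f1 (Z - Zs) \<alpha> = f1 Z \<alpha> - (\<Sum>y\<in>vecs k G. S \<alpha> * p y)"
        by (simp add: f1_def eval_diff sum_subtractf evZs)
      also have "\<dots> = 0" using p(3) f1Z by (simp add: sum_distrib_left[symmetric])
      finally show "f1 (Z - Zs) \<alpha> = 0" .
    next
      fix q assume q: "q \<in> Q"
      have "drop m q \<in> T" using q T_def by auto
      then show "f2 (Z - Zs) q = f2 Z q" using p(2) by (simp add: f2_def eval_diff evZs)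
    qed
  qed
  have key: "card {Z\<in>V. restrict (f1 Z) (vecs m UNIV) = a \<and> restrict (f2 Z) Q = b} * card V
       = card {Z\<in>V. restrict (f1 Z) (vecs m UNIV) = a} * card {Z\<in>V. restrict (f2 Z) Q = b}"
    by (rule indep_card[OF Vfin add neg a1 a2 dec]) auto
  have pr: "measure_pmf.prob (pmf_of_set V) {Z. P Z} = card {Z\<in>V. P Z} / card V" for P
    using measure_pmf_of_set[OF Vne Vfin, of "{Z. P Z}"] by (simp add: Int_def)
  have cV: "card V > 0" using Vne Vfin by (simp add: card_gt_0_iff)
  have "real (card {Z\<in>V. restrict (f1 Z) (vecs m UNIV) = a \<and> restrict (f2 Z) Q = b}) / card V
      = (card {Z\<in>V. restrict (f1 Z) (vecs m UNIV) = a} / card V) * (card {Z\<in>V. restrict (f2 Z) Q = b} / card V)"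
  proof -
    have "real (card {Z\<in>V. restrict (f1 Z) (vecs m UNIV) = a \<and> restrict (f2 Z) Q = b}) * card V
       = real (card {Z\<in>V. restrict (f1 Z) (vecs m UNIV) = a}) * card {Z\<in>V. restrict (f2 Z) Q = b}"
      using arg_cong[OF key, of real] by (simp only: of_nat_mult)
    then show ?thesis using cV by (simp add: field_simps)
  qed
  then show "measure_pmf.prob (pmf_of_set (ideg_polys m k d d'))
          {Z. (\<lambda>\<alpha>\<in>vecs m UNIV. \<Sum>y\<in>vecs k G. ideg_eval m k d d' Z \<alpha> y) = a
              \<and> (\<lambda>q\<in>Q. ideg_eval m k d d' Z (take m q) (drop m q)) = b}
        = measure_pmf.prob (pmf_of_set (ideg_polys m k d d'))
            {Z. (\<lambda>\<alpha>\<in>vecs m UNIV. \<Sum>y\<in>vecs k G. ideg_eval m k d d' Z \<alpha> y) = a}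
        * measure_pmf.prob (pmf_of_set (ideg_polys m k d d'))
            {Z. (\<lambda>q\<in>Q. ideg_eval m k d d' Z (take m q) (drop m q)) = b}"
    unfolding V_def[symmetric] pr unfolding f1_def f2_def .
qed

end
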